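(* For all $x\ne y$ in $\mathcal X$, $Q^N_{xy}\to Q_{xy}$ uniformly as $N\to\infty$, where $Q_{xy}(\mu)=\sqrt{\pi_y(\mu)/\pi_x(\mu)}\,A_{xy}(\mu)$. In particular, $\mu\mapsto Q_{xy}(\mu)$ is Lipschitz continuous on $\mathcal P(\mathcal X)$ for all $x,y\in\mathcal X$.
   Context: $\mathcal X=\{1,\dots,d\}$ finite, $\mathcal P(\mathcal X)\subset\mathbb R^{\mathcal X}$; for $N\in\mathbb N$, $\mathcal P_N(\mathcal X)=\{\frac1N\sum_{i=1}^N\delta_{x_i}:x_i\in\mathcal X\}$. $K:\mathcal P(\mathcal X)\times\mathcal X\to\mathbb R$ with each $K_x$ twice continuously differentiable on a neighbourhood of $\mathcal P(\mathcal X)$; $U(\mu)=\sum_x\mu_xK_x(\mu)$, $H_x=\partial_{\mu_x}U$, $\pi_x(\mu)=e^{-H_x(\mu)}/\sum_ze^{-H_z(\mu)}$. $\{A(\mu)\}_{\mu\in\mathcal P(\mathcal X)}$ irreducible symmetric nonnegative matrices with $\mu\mapsto A(\mu)$ Lipschitz; $\{A^N(\mu)\}_{\mu\in\mathcal P(\mathcal X),N\in\mathbb N}$ irreducible symmetric nonnegative matrices with $A^N_{xy}\to A_{xy}$ uniformly on $\mathcal P(\mathcal X)$ for all $x,y$. For $\mu\in\mathcal P_N(\mathcal X)$ with $\mu_x>0$ and $y\ne x$, $Q^N_{xy}(\mu)=\exp\big(-\frac N2\big(U(\mu+\frac{\delta_y-\delta_x}N)-U(\mu)\big)\big)A^N_{xy}(\mu)$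 (equivalently $Q^N_{x_i,y}(L^N\bm x)=\sqrt{\bm\pi^N_{\bm x^{i;y}}/\bm\pi^N_{\bm x}}A^N_{x_i,y}(L^N\bm x)$ with $\bm\pi^N_{\bm x}\propto\exp(-NU(L^N\bm x))$). *)

theory Defs
  imports "HOL-Analysis.Analysis"
begin

text \<open>The finite state space X is a finite type 'n; measures on X are vectors real^'n.\<close>

definition prob_simplex :: "(real^'n) set" where
  "prob_simplex = {\<mu>. (\<forall>z. 0 \<le> \<mu> $ z) \<and> (\<Sum>z\<in>UNIV. \<mu> $ z) = 1}"

definition empirical_measures :: "nat \<Rightarrow> (real^'n) set" where
  "empirical_measures N = {\<mu>. \<exists>xs :: nat \<Rightarrow> 'n.
      \<mu> = (\<chi> z. real (card {i\<in>{1..N}. xs i = z}) / real N)}"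

definition C2_on :: "'a::euclidean_space set \<Rightarrow> ('a \<Rightarrow> real) \<Rightarrow> bool" where
  "C2_on S f \<longleftrightarrow> (\<exists>(D :: 'a \<Rightarrow> 'a \<Rightarrow>\<^sub>L real) (D2 :: 'a \<Rightarrow> 'a \<Rightarrow>\<^sub>L ('a \<Rightarrow>\<^sub>L real)).
      (\<forall>u\<in>S. (f has_derivative blinfun_apply (D u)) (at u)) \<and>
      (\<forall>u\<in>S. (D has_derivative blinfun_apply (D2 u)) (at u)) \<and>
      continuous_on S D2)"

definition delta_vec :: "'n \<Rightarrow> real^'n" where
  "delta_vec x = axis x 1"

definition energy :: "('n \<Rightarrow> real^'n \<Rightarrow> real) \<Rightarrow> real^'n \<Rightarrow> real" where
  "energy K \<mu> = (\<Sum>z\<in>UNIV. \<mu> $ z * K z \<mu>)"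

definition Hfun :: "('n \<Rightarrow> real^'n \<Rightarrow> real) \<Rightarrow> 'n \<Rightarrow> real^'n \<Rightarrow> real" where
  "Hfun K x \<mu> = deriv (\<lambda>t. energy K (\<mu> + t *\<^sub>R delta_vec x)) 0"

definition gibbs :: "('n \<Rightarrow> real^'n \<Rightarrow> real) \<Rightarrow> 'n \<Rightarrow> real^'n \<Rightarrow> real" where
  "gibbs K x \<mu> = exp (- Hfun K x \<mu>) / (\<Sum>z\<in>UNIV. exp (- Hfun K z \<mu>))"

definition irreducible_mat :: "real^'n^'n \<Rightarrow> bool" where
  "irreducible_mat M \<longleftrightarrow> (\<forall>x y. (x, y) \<in> {(a, b). M $ a $ b > 0}\<^sup>*)"

definition symmetric_mat :: "real^'n^'n \<Rightarrow> bool" where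
  "symmetric_mat M \<longleftrightarrow> transpose M = M"

definition nonneg_mat :: "real^'n^'n \<Rightarrow> bool" where
  "nonneg_mat M \<longleftrightarrow> (\<forall>x y. 0 \<le> M $ x $ y)"

definition QN :: "('n \<Rightarrow> real^'n \<Rightarrow> real) \<Rightarrow> (nat \<Rightarrow> real^'n \<Rightarrow> real^'n^'n)
                  \<Rightarrow> nat \<Rightarrow> 'n \<Rightarrow> 'n \<Rightarrow> real^'n \<Rightarrow> real" where
  "QN K AN N x y \<mu> = exp (- (real N / 2) *
      (energy K (\<mu> + (1 / real N) *\<^sub>R (delta_vec y - delta_vec x)) - energy K \<mu>))
      * AN N \<mu> $ x $ y"

definition Qlim :: "('n \<Rightarrow> real^'n \<Rightarrow> real) \<Rightarrow> (real^'n \<Rightarrow> real^'n^'n)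
                  \<Rightarrow> 'n \<Rightarrow> 'n \<Rightarrow> real^'n \<Rightarrow> real" where
  "Qlim K A x y \<mu> = sqrt (gibbs K y \<mu> / gibbs K x \<mu>) * A \<mu> $ x $ y"

end

theory Submission
  imports Defs
begin

lemma card_fibres_sum:
  assumes "finite A"
  shows "(\<Sum>z\<in>(UNIV::'n::finite set). card {i\<in>A. f i = z}) = card A"
proof -
  have "A = (\<Union>z. {i\<in>A. f i = z})" by auto
  hence "card A = card (\<Union>z. {i\<in>A. f i = z})" by simp
  also have "\<dots> = (\<Sum>z\<in>UNIV. card {i\<in>A. f i = z})"
    by (rule card_UN_disjoint) (use assms in auto)
  finally show ?thesis by simp
qed

lemma empirical_in_simplex:
  assumes "N \<ge> 1" "\<mu> \<in> empirical_measures N"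
  shows "\<mu> \<in> (prob_simplex :: (real^'n::finite) set)"
proof -
  obtain xs :: "nat \<Rightarrow> 'n" where mu: "\<mu> = (\<chi> z. real (card {i\<in>{1..N}. xs i = z}) / real N)"
    using assms(2) unfolding empirical_measures_def by blast
  have "(\<Sum>z\<in>UNIV. \<mu> $ z) = (\<Sum>z\<in>UNIV. real (card {i\<in>{1..N}. xs i = z})) / real N"
    unfolding mu by (simp add: sum_divide_distrib)
  also have "(\<Sum>z\<in>UNIV. real (card {i\<in>{1..N}. xs i = z})) = real N"
    using card_fibres_sum[of "{1..N}" xs] by (metis card_atLeastAtMost diff_Suc_1 finite_atLeastAtMost of_nat_sum)
  finally have "(\<Sum>z\<in>UNIV. \<mu> $ z) = 1" using assms(1) by simp
  moreover have "\<forall>z. 0 \<le> \<mu> $ z" unfolding mu by simp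
  ultimately show ?thesis unfolding prob_simplex_def by blast
qed

lemma empirical_pos:
  fixes \<mu> :: "real^'n::finite"
  assumes "\<mu> \<in> empirical_measures N" "\<mu> $ x > 0"
  shows "\<mu> $ x \<ge> 1 / real N"
proof -
  obtain xs :: "nat \<Rightarrow> 'n::finite" where mu: "\<mu> = (\<chi> z. real (card {i\<in>{1..N}. xs i = z}) / real N)"
    using assms(1) unfolding empirical_measures_def by blast
  have "real (card {i\<in>{1..N}. xs i = x}) / real N > 0" using assms(2) unfolding mu by simp
  hence "card {i\<in>{1..N}. xs i = x} \<noteq> 0" by (metis div_0 of_nat_0 less_irrefl)
  hence "card {i\<in>{1..N}. xs i = x} \<ge> 1" by (metis less_one not_le)
  hence "real (card {i\<in>{1..N}. xs i = x}) \<ge> 1" by (metis of_nat_1 of_nat_mono)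
  thus ?thesis unfolding mu by (simp add: divide_right_mono)
qed

lemma simplex_convex: "convex (prob_simplex :: (real^'n::finite) set)"
  unfolding convex_def prob_simplex_def
proof (intro ballI allI impI)
  fix x y :: "real^'n" and u v :: real
  assume h: "x \<in> {\<mu>. (\<forall>z. 0 \<le> \<mu> $ z) \<and> (\<Sum>z\<in>UNIV. \<mu> $ z) = 1}"
     "y \<in> {\<mu>. (\<forall>z. 0 \<le> \<mu> $ z) \<and> (\<Sum>z\<in>UNIV. \<mu> $ z) = 1}"
    "0 \<le> u" "0 \<le> v" "u + v = 1"
  show "u *\<^sub>R x + v *\<^sub>R y \<in> {\<mu>. (\<forall>z. 0 \<le> \<mu> $ z) \<and> (\<Sum>z\<in>UNIV. \<mu> $ z) = 1}"
    using h by (simp add: sum.distrib sum_distrib_left[symmetric])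
qed

lemma simplex_compact: "compact (prob_simplex :: (real^'n::finite) set)"
unfolding compact_eq_bounded_closed
proof (rule conjI)
  show "bounded (prob_simplex :: (real^'n::finite) set)"
    unfolding bounded_iff
  proof (intro exI ballI)
    fix x :: "real^'n" assume "x \<in> prob_simplex"
    hence "\<forall>z. 0 \<le> x $ z" "sum (($) x) UNIV = 1" unfolding prob_simplex_def by auto
    thus "norm x \<le> 1" using norm_le_l1_cart[of x] by simp
  qed
  have "prob_simplex = (\<Inter>z. {x::real^'n. 0 \<le> x $ z}) \<inter> {x. (\<Sum>z\<in>UNIV. x $ z) = 1}"
    unfolding prob_simplex_def by auto
  moreover have "closed {x::real^'n. (\<Sum>z\<in>UNIV. x $ z) = 1}"
    by (intro closed_Collect_eq continuous_intros)
  moreover have "closed (\<Inter>z. {x::real^'n. 0 \<le> x $ z})"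
    by (intro closed_INT ballI closed_Collect_le continuous_intros)
  ultimately show "closed (prob_simplex :: (real^'n::finite) set)" by (metis closed_Int)
qed

lemma exp_lip: fixes a b :: real shows "\<bar>exp a - exp b\<bar> \<le> exp (max a b) * \<bar>a - b\<bar>"
proof -
  have *: "exp b' - exp a' \<le> exp b' * (b' - a')" if "a' \<le> b'" for a' b' :: real
  proof (cases "a' = b'")
    case False
    hence "a' < b'" using that by simp
    from MVT2[OF this, of exp exp] obtain z where "z > a'" "z < b'" "exp b' - exp a' = (b' - a') * exp z"
      by (auto intro: DERIV_exp)
    thus ?thesis using that by (simp add: mult.commute mult_left_mono)
  qed simp
  show ?thesis
  proof (cases "a \<le> b")
    case True thus ?thesis using *[of a b] True by (simp add: abs_if max_def)
  next
    case False thus ?thesis using *[of b a] by (simp add: abs_if max_def)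
  qed
qed

lemma finite_min_delta:
  fixes P :: "'n::finite \<Rightarrow> real \<Rightarrow> bool"
  assumes "\<forall>z. \<exists>d>0. P z d"
    and "\<And>z d d'. 0 < d' \<Longrightarrow> d' \<le> d \<Longrightarrow> P z d \<Longrightarrow> P z d'"
  shows "\<exists>d>0. \<forall>z. P z d"
proof -
  obtain d where d: "\<And>z. d z > 0 \<and> P z (d z)" using assms(1) by metis
  let ?m = "Min (range d)"
  have "?m > 0" using d by (simp)
  moreover have "P z ?m" for z using assms(2)[of ?m "d z" z] d \<open>?m > 0\<close> by simp
  ultimately show ?thesis by blast
qed


lemma lin_approx:
  fixes f :: "'a::euclidean_space \<Rightarrow> real" and D :: "'a \<Rightarrow> ('a \<Rightarrow>\<^sub>L real)"
  assumes T: "convex T" "compact T"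
    and der: "\<forall>u\<in>T. (f has_derivative blinfun_apply (D u)) (at u)"
    and cont: "continuous_on T D"
    and eps: "\<epsilon> > 0"
  shows "\<exists>\<delta>>0. \<forall>u\<in>T. \<forall>v\<in>T. norm (v - u) < \<delta> \<longrightarrow>
           \<bar>f v - f u - D u (v - u)\<bar> \<le> \<epsilon> * norm (v - u)"
proof -
  have "uniformly_continuous_on T D" using compact_uniformly_continuous[OF cont T(2)] .
  then obtain d where d: "d > 0" "\<And>x x'. x \<in> T \<Longrightarrow> x' \<in> T \<Longrightarrow> dist x' x < d \<Longrightarrow> dist (D x') (D x) < \<epsilon>"
    unfolding uniformly_continuous_on_def using eps by metis
  show ?thesis
  proof (intro exI[of _ d] conjI ballI impI d(1))
    fix u v assume uv: "u \<in> T" "v \<in> T" "norm (v - u) < d"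
    have seg: "closed_segment u v \<subseteq> T" using closed_segment_subset[OF uv(1,2) T(1)] .
    have "norm (f v - f u - blinfun_apply (D u) (v - u)) \<le> norm (v - u) * \<epsilon>"
    proof (rule differentiable_bound_linearization[where S="closed_segment u v" and f'="\<lambda>x. blinfun_apply (D x)"])
      fix t :: real assume "t \<in> {0..1}"
      thus "u + t *\<^sub>R (v - u) \<in> closed_segment u v"
        unfolding in_segment by (intro exI[of _ t]) (auto simp: algebra_simps)
    next
      fix x assume "x \<in> closed_segment u v"
      hence "x \<in> T" using seg by auto
      thus "(f has_derivative blinfun_apply (D x)) (at x within closed_segment u v)"
        using der has_derivative_at_withinI by blast
    next
      fix x assume x: "x \<in> closed_segment u v"
      hence xT: "x \<in> T" using seg by auto
      have "norm (x - u) \<le> norm (v - u)" using segment_bound1[OF x] .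
      hence "dist x u < d" using uv(3) by (simp add: dist_norm)
      hence "dist (D x) (D u) < \<epsilon>" using d(2)[OF uv(1) xT] by simp
      moreover have "onorm (blinfun_apply (D x) - blinfun_apply (D u)) = dist (D x) (D u)"
      proof -
        have "blinfun_apply (D x) - blinfun_apply (D u) = blinfun_apply (D x - D u)"
          by (rule ext) (simp add: blinfun.diff_left)
        thus ?thesis by (simp add: dist_norm norm_blinfun.rep_eq)
      qed
      ultimately show "onorm (blinfun_apply (D x) - blinfun_apply (D u)) \<le> \<epsilon>" by simp
    next
      show "u \<in> closed_segment u v" by simp
    qed
    thus "\<bar>f v - f u - D u (v - u)\<bar> \<le> \<epsilon> * norm (v - u)" by (simp add: mult.commute)
  qed
qed

lemma deriv_bound_lip:
  fixes f :: "'a::euclidean_space \<Rightarrow> real"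
  assumes "convex T" "\<forall>u\<in>T. (f has_derivative f' u) (at u)"
    "\<forall>u\<in>T. \<forall>h. \<bar>f' u h\<bar> \<le> B * norm h" "B \<ge> 0"
  shows "B-lipschitz_on T f"
proof (rule lipschitz_onI)
  fix x y assume xy: "x \<in> T" "y \<in> T"
  have "norm (f x - f y) \<le> B * norm (x - y)"
  proof (rule differentiable_bound[OF assms(1) _ _ xy])
    fix u assume "u \<in> T"
    thus "(f has_derivative f' u) (at u within T)" using assms(2) has_derivative_at_withinI by blast
    show "onorm (f' u) \<le> B" by (rule onorm_le) (use assms(3) \<open>u \<in> T\<close> in auto)
  qed
  thus "dist (f x) (f y) \<le> B * dist x y" by (simp add: dist_norm)
qed (use assms in auto)

lemma bounded_on_compact:
  fixes g :: "'a::metric_space \<Rightarrow> 'b::real_normed_vector"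
  assumes "continuous_on T g" "compact T"
  shows "\<exists>M. \<forall>u\<in>T. norm (g u) \<le> M"
proof -
  have "bounded (g ` T)" using compact_imp_bounded[OF compact_continuous_image[OF assms(1,2)]] .
  thus ?thesis unfolding bounded_iff by auto
qed

lemma lip_mult:
  fixes f g :: "'a::metric_space \<Rightarrow> real"
  assumes "C-lipschitz_on T f" "D-lipschitz_on T g"
    "\<forall>u\<in>T. \<bar>f u\<bar> \<le> Mf" "\<forall>u\<in>T. \<bar>g u\<bar> \<le> Mg"
  shows "\<exists>L. L-lipschitz_on T (\<lambda>u. f u * g u)"
proof -
  have C: "C \<ge> 0" and D: "D \<ge> 0" using assms lipschitz_on_nonneg by blast+
  show ?thesis
  proof (intro exI[of _ "\<bar>Mf\<bar> * D + \<bar>Mg\<bar> * C"] lipschitz_onI)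
    show "0 \<le> \<bar>Mf\<bar> * D + \<bar>Mg\<bar> * C" using C D by simp
    fix x y assume xy: "x \<in> T" "y \<in> T"
    have "f x * g x - f y * g y = f x * (g x - g y) + g y * (f x - f y)" by (simp add: algebra_simps)
    hence "\<bar>f x * g x - f y * g y\<bar> \<le> \<bar>f x\<bar> * \<bar>g x - g y\<bar> + \<bar>g y\<bar> * \<bar>f x - f y\<bar>"
      by (metis abs_mult abs_triangle_ineq)
    also have "\<dots> \<le> \<bar>Mf\<bar> * (D * dist x y) + \<bar>Mg\<bar> * (C * dist x y)"
    proof (rule add_mono; rule mult_mono)
      show "\<bar>f x\<bar> \<le> \<bar>Mf\<bar>" using assms(3) xy by force
      show "\<bar>g x - g y\<bar> \<le> D * dist x y" using lipschitz_onD[OF assms(2) xy] by (simp add: dist_real_def)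
      show "\<bar>g y\<bar> \<le> \<bar>Mg\<bar>" using assms(4) xy by force
      show "\<bar>f x - f y\<bar> \<le> C * dist x y" using lipschitz_onD[OF assms(1) xy] by (simp add: dist_real_def)
    qed auto
    finally show "dist (f x * g x) (f y * g y) \<le> (\<bar>Mf\<bar> * D + \<bar>Mg\<bar> * C) * dist x y"
      by (simp add: dist_real_def algebra_simps)
  qed
qed

lemma lip_exp:
  fixes f :: "'a::metric_space \<Rightarrow> real"
  assumes "C-lipschitz_on T f" "\<forall>u\<in>T. \<bar>f u\<bar> \<le> M"
  shows "(exp M * C)-lipschitz_on T (\<lambda>u. exp (f u))"
proof (rule lipschitz_onI)
  have C: "C \<ge> 0" using assms lipschitz_on_nonneg by blast
  thus "0 \<le> exp M * C" by simp
  fix x y assume xy: "x \<in> T" "y \<in> T"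
  have "\<bar>exp (f x) - exp (f y)\<bar> \<le> exp (max (f x) (f y)) * \<bar>f x - f y\<bar>" by (rule exp_lip)
  also have "\<dots> \<le> exp M * (C * dist x y)"
  proof (rule mult_mono)
    show "exp (max (f x) (f y)) \<le> exp M" using assms(2) xy by (auto simp: max_def)
    show "\<bar>f x - f y\<bar> \<le> C * dist x y" using lipschitz_onD[OF assms(1) xy] by (simp add: dist_real_def)
  qed auto
  finally show "dist (exp (f x)) (exp (f y)) \<le> exp M * C * dist x y" by (simp add: dist_real_def)
qed

lemma lip_sum:
  fixes f :: "'i \<Rightarrow> 'a::metric_space \<Rightarrow> real"
  assumes "finite I" "\<forall>i\<in>I. \<exists>C. C-lipschitz_on T (f i)"
  shows "\<exists>C. C-lipschitz_on T (\<lambda>u. \<Sum>i\<in>I. f i u)"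
  using assms
proof (induction I rule: finite_induct)
  case empty thus ?case using lipschitz_on_constant by fastforce
next
  case (insert i I)
  then obtain C1 C2 where "C1-lipschitz_on T (f i)" "C2-lipschitz_on T (\<lambda>u. \<Sum>i\<in>I. f i u)" by auto
  from lipschitz_on_add[OF this] show ?case using insert by auto
qed


lemma delta_nth: "delta_vec x $ z = (if z = x then 1 else 0)"
  unfolding delta_vec_def by (simp add: axis_def)

lemma Hfun_formula:
  fixes K :: "'n::finite \<Rightarrow> real^'n \<Rightarrow> real" and DK :: "'n \<Rightarrow> real^'n \<Rightarrow> ((real^'n) \<Rightarrow>\<^sub>L real)"
  assumes der: "\<forall>z. (K z has_derivative blinfun_apply (DK z u)) (at u)"
  shows "Hfun K x u = (\<Sum>z\<in>UNIV. u$z * DK z u (delta_vec x)) + K x u"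
proof -
  define \<delta> where "\<delta> = delta_vec x"
  have Kd: "((\<lambda>t. K z (u + t *\<^sub>R \<delta>)) has_real_derivative DK z u \<delta>) (at 0)" for z
  proof -
    have p: "((\<lambda>t::real. u + t *\<^sub>R \<delta>) has_derivative (\<lambda>t. t *\<^sub>R \<delta>)) (at 0)"
      by (auto intro!: derivative_eq_intros)
    have k: "(K z has_derivative blinfun_apply (DK z u)) (at ((\<lambda>t::real. u + t *\<^sub>R \<delta>) 0))"
      using der by simp
    from diff_chain_at[OF p k]
    have "((K z \<circ> (\<lambda>t. u + t *\<^sub>R \<delta>)) has_derivative (blinfun_apply (DK z u) \<circ> (\<lambda>t. t *\<^sub>R \<delta>))) (at 0)" .
    moreover have "(blinfun_apply (DK z u) \<circ> (\<lambda>t. t *\<^sub>R \<delta>)) = (*) (DK z u \<delta>)"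
      by (rule ext) (simp add: blinfun.scaleR_right)
    ultimately show ?thesis by (simp add: has_field_derivative_def o_def)
  qed
  have cd: "((\<lambda>t. (u + t *\<^sub>R \<delta>) $ z) has_real_derivative \<delta> $ z) (at 0)" for z
    by (simp) (auto intro!: derivative_eq_intros)
  have "((\<lambda>t. \<Sum>z\<in>UNIV. (u + t *\<^sub>R \<delta>) $ z * K z (u + t *\<^sub>R \<delta>)) has_real_derivative
        (\<Sum>z\<in>UNIV. \<delta> $ z * K z (u + 0 *\<^sub>R \<delta>) + DK z u \<delta> * (u + 0 *\<^sub>R \<delta>) $ z)) (at 0)"
    by (intro DERIV_sum DERIV_mult cd Kd)
  hence "((\<lambda>t. energy K (u + t *\<^sub>R \<delta>)) has_real_derivative
        (\<Sum>z\<in>UNIV. \<delta> $ z * K z u + u $ z * DK z u \<delta>)) (at 0)"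
    unfolding energy_def by (simp add: mult.commute)
  hence "Hfun K x u = (\<Sum>z\<in>UNIV. \<delta> $ z * K z u + u $ z * DK z u \<delta>)"
    unfolding Hfun_def \<delta>_def by (rule DERIV_imp_deriv)
  also have "\<dots> = (\<Sum>z\<in>UNIV. \<delta> $ z * K z u) + (\<Sum>z\<in>UNIV. u $ z * DK z u \<delta>)"
    by (simp add: sum.distrib)
  also have "(\<Sum>z\<in>UNIV. \<delta> $ z * K z u) = K x u"
  proof -
    have "(\<Sum>z\<in>UNIV. \<delta> $ z * K z u) = (\<Sum>z\<in>UNIV. if z = x then K z u else 0)"
      by (rule sum.cong) (auto simp: \<delta>_def delta_nth)
    thus ?thesis by simp
  qed
  finally show ?thesis unfolding \<delta>_def by simp
qed


lemma energy_est:
  fixes K :: "'n::finite \<Rightarrow> real^'n \<Rightarrow> real" and DK :: "'n \<Rightarrow> real^'n \<Rightarrow> ((real^'n) \<Rightarrow>\<^sub>L real)"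
    and N e :: real and \<mu> h :: "real^'n"
  assumes N: "N > 0"
    and der: "\<forall>z. (K z has_derivative blinfun_apply (DK z \<mu>)) (at \<mu>)"
    and w1: "\<forall>z. \<bar>K z (\<mu> + h) - K z \<mu> - DK z \<mu> h\<bar> \<le> e * norm h"
    and w2: "\<forall>z. \<bar>K z (\<mu> + h) - K z \<mu>\<bar> \<le> e"
    and mu: "\<forall>z. 0 \<le> \<mu> $ z" "(\<Sum>z\<in>UNIV. \<mu> $ z) = 1"
    and h: "h = (1 / N) *\<^sub>R (delta_vec y - delta_vec x)"
  shows "\<bar>N * (energy K (\<mu> + h) - energy K \<mu>) - (Hfun K y \<mu> - Hfun K x \<mu>)\<bar> \<le> 4 * e"
proof -
  define d0 where "d0 = delta_vec y - delta_vec x"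
  have hN: "N *\<^sub>R h = d0" unfolding h d0_def using N by simp
  have nd0: "norm d0 \<le> 2" unfolding d0_def
    using norm_triangle_ineq4[of "delta_vec y" "delta_vec x"] by (simp add: delta_vec_def)
  have nh: "N * norm h \<le> 2" using hN nd0 N by (metis abs_of_pos norm_scaleR)
  have hz: "h $ z = d0 $ z / N" for z unfolding h d0_def by simp
  have e0: "e \<ge> 0" using w2 abs_ge_zero order_trans by blast
  define v where "v = \<mu> + h"
  have i: "N * (energy K v - energy K \<mu>) =
     (\<Sum>z\<in>UNIV. \<mu> $ z * (N * (K z v - K z \<mu>))) + (K y v - K x v)"
  proof -
    have "N * (energy K v - energy K \<mu>) = (\<Sum>z\<in>UNIV. N * (v $ z * K z v - \<mu> $ z * K z \<mu>))"
      unfolding energy_def by (simp add: sum_distrib_left sum_subtractf right_diff_distrib)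
    also have "\<dots> = (\<Sum>z\<in>UNIV. \<mu> $ z * (N * (K z v - K z \<mu>)) + d0 $ z * K z v)"
      by (rule sum.cong) (use N in \<open>auto simp: v_def hz field_simps\<close>)
    also have "\<dots> = (\<Sum>z\<in>UNIV. \<mu> $ z * (N * (K z v - K z \<mu>))) + (\<Sum>z\<in>UNIV. d0 $ z * K z v)"
      by (simp add: sum.distrib)
    also have "(\<Sum>z\<in>UNIV. d0 $ z * K z v) = K y v - K x v"
    proof -
      have "(\<Sum>z\<in>UNIV. d0 $ z * K z v) = (\<Sum>z\<in>UNIV. (if z = y then K z v else 0) - (if z = x then K z v else 0))"
        by (rule sum.cong) (auto simp: d0_def delta_nth)
      thus ?thesis by (simp add: sum_subtractf)
    qed
    finally show ?thesis .
  qed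
  have ii: "Hfun K y \<mu> - Hfun K x \<mu> = (\<Sum>z\<in>UNIV. \<mu> $ z * (N * DK z \<mu> h)) + (K y \<mu> - K x \<mu>)"
  proof -
    have "Hfun K y \<mu> - Hfun K x \<mu> = (\<Sum>z\<in>UNIV. \<mu> $ z * DK z \<mu> (delta_vec y) - \<mu> $ z * DK z \<mu> (delta_vec x))
         + (K y \<mu> - K x \<mu>)"
      unfolding Hfun_formula[where DK=DK, OF der] by (simp add: sum_subtractf)
    also have "(\<Sum>z\<in>UNIV. \<mu> $ z * DK z \<mu> (delta_vec y) - \<mu> $ z * DK z \<mu> (delta_vec x))
        = (\<Sum>z\<in>UNIV. \<mu> $ z * (N * DK z \<mu> h))"
    proof (rule sum.cong)
      fix z
      have "DK z \<mu> (delta_vec y) - DK z \<mu> (delta_vec x) = DK z \<mu> d0"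
        unfolding d0_def by (simp add: blinfun.diff_right)
      also have "\<dots> = N * DK z \<mu> h" unfolding hN[symmetric] by (simp add: blinfun.scaleR_right)
      finally show "\<mu> $ z * DK z \<mu> (delta_vec y) - \<mu> $ z * DK z \<mu> (delta_vec x) = \<mu> $ z * (N * DK z \<mu> h)"
        by (simp add: right_diff_distrib[symmetric])
    qed simp
    finally show ?thesis .
  qed
  have "N * (energy K v - energy K \<mu>) - (Hfun K y \<mu> - Hfun K x \<mu>) =
     (\<Sum>z\<in>UNIV. \<mu> $ z * (N * (K z v - K z \<mu> - DK z \<mu> h))) + (K y v - K y \<mu>) - (K x v - K x \<mu>)"
  proof -
    have s: "(\<Sum>z\<in>UNIV. \<mu> $ z * (N * (K z v - K z \<mu>))) - (\<Sum>z\<in>UNIV. \<mu> $ z * (N * DK z \<mu> h))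
       = (\<Sum>z\<in>UNIV. \<mu> $ z * (N * (K z v - K z \<mu> - DK z \<mu> h)))"
      unfolding sum_subtractf[symmetric] by (rule sum.cong) (simp_all add: algebra_simps)
    show ?thesis unfolding i ii using s by linarith
  qed
  also have "\<bar>\<dots>\<bar> \<le> \<bar>\<Sum>z\<in>UNIV. \<mu> $ z * (N * (K z v - K z \<mu> - DK z \<mu> h))\<bar> + \<bar>K y v - K y \<mu>\<bar> + \<bar>K x v - K x \<mu>\<bar>"
    by linarith
  also have "\<dots> \<le> 2 * e + e + e"
  proof -
    have "\<bar>\<Sum>z\<in>UNIV. \<mu> $ z * (N * (K z v - K z \<mu> - DK z \<mu> h))\<bar> \<le> (\<Sum>z\<in>UNIV. \<mu> $ z * (2 * e))"
    proof (rule order_trans[OF sum_abs], rule sum_mono)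
      fix z
      have "\<bar>N * (K z v - K z \<mu> - DK z \<mu> h)\<bar> \<le> N * (e * norm h)"
        using w1 N by (simp add: abs_mult v_def mult_left_mono)
      also have "\<dots> = e * (N * norm h)" by simp
      also have "\<dots> \<le> e * 2" using nh e0 by (simp add: mult_left_mono)
      finally show "\<bar>\<mu> $ z * (N * (K z v - K z \<mu> - DK z \<mu> h))\<bar> \<le> \<mu> $ z * (2 * e)"
        using mu(1) by (simp add: abs_mult mult_left_mono mult.commute)
    qed
    also have "\<dots> = 2 * e" using mu(2) by (simp add: sum_distrib_right[symmetric])
    finally show ?thesis using w2[rule_format, of x] w2[rule_format, of y] unfolding v_def by linarith
  qed
  finally show ?thesis unfolding v_def by simp
qed


lemma lip_bounded:
  fixes f :: "'a::metric_space \<Rightarrow> real"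
  assumes "C-lipschitz_on T f" "compact T"
  shows "\<exists>M. \<forall>u\<in>T. \<bar>f u\<bar> \<le> M"
  using bounded_on_compact[OF lipschitz_on_continuous_on[OF assms(1)] assms(2)] by auto

lemma Qlim_eq: "Qlim K A x y u = exp ((Hfun K x u - Hfun K y u) / 2) * A u $ x $ y"
proof -
  have pos: "(\<Sum>z\<in>UNIV. exp (- Hfun K z u)) > 0" by (intro sum_pos) auto
  have "gibbs K y u / gibbs K x u = exp (- Hfun K y u) / exp (- Hfun K x u)"
    unfolding gibbs_def using pos by (simp add: field_simps)
  also have "\<dots> = exp (Hfun K x u - Hfun K y u)" by (simp add: exp_diff[symmetric])
  finally have r: "gibbs K y u / gibbs K x u = exp (Hfun K x u - Hfun K y u)" .
  have "sqrt (exp (Hfun K x u - Hfun K y u)) = exp ((Hfun K x u - Hfun K y u) / 2)"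
  proof (rule real_sqrt_unique)
    show "(exp ((Hfun K x u - Hfun K y u) / 2))\<^sup>2 = exp (Hfun K x u - Hfun K y u)"
      by (simp add: power2_eq_square exp_add[symmetric])
  qed simp
  thus ?thesis unfolding Qlim_def r by simp
qed

lemma exp_prod_est:
  fixes a a' B B' \<eta> M MA :: real
  assumes "\<bar>a' - a\<bar> \<le> \<eta>" "\<bar>B' - B\<bar> \<le> \<eta>" "\<eta> \<le> 1" "\<bar>a\<bar> \<le> M" "\<bar>B\<bar> \<le> MA"
  shows "\<bar>exp a' * B' - exp a * B\<bar> \<le> exp (M + 1) * \<eta> * (1 + MA)"
proof -
  have "exp a' * B' - exp a * B = exp a' * (B' - B) + B * (exp a' - exp a)" by (simp add: algebra_simps)
  hence "\<bar>exp a' * B' - exp a * B\<bar> \<le> exp a' * \<bar>B' - B\<bar> + \<bar>B\<bar> * \<bar>exp a' - exp a\<bar>"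
    by (metis abs_mult abs_triangle_ineq abs_exp_cancel)
  also have "\<dots> \<le> exp (M + 1) * \<eta> + MA * (exp (M + 1) * \<eta>)"
  proof (rule add_mono; rule mult_mono)
    show "exp a' \<le> exp (M + 1)" using assms by simp
    have "\<bar>exp a' - exp a\<bar> \<le> exp (max a' a) * \<bar>a' - a\<bar>" by (rule exp_lip)
    also have "\<dots> \<le> exp (M + 1) * \<eta>" by (rule mult_mono) (use assms in \<open>auto simp: max_def\<close>)
    finally show "\<bar>exp a' - exp a\<bar> \<le> exp (M + 1) * \<eta>" .
  qed (use assms in auto)
  also have "\<dots> = exp (M + 1) * \<eta> * (1 + MA)" by (simp add: algebra_simps)
  finally show ?thesis .
qed

lemma coord_lip: "1-lipschitz_on T (\<lambda>u::real^'n::finite. u $ z)"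
  by (rule lipschitz_onI) (use dist_vec_nth_le in auto)


theorem lemma3p4:
  fixes K :: "'n::finite \<Rightarrow> real^'n \<Rightarrow> real"
    and A :: "real^'n \<Rightarrow> real^'n^'n"
    and AN :: "nat \<Rightarrow> real^'n \<Rightarrow> real^'n^'n"
  assumes K_C2: "\<exists>S. open S \<and> prob_simplex \<subseteq> S \<and> (\<forall>x. C2_on S (K x))"
    and A_mat: "\<forall>\<mu>\<in>prob_simplex. irreducible_mat (A \<mu>) \<and> symmetric_mat (A \<mu>) \<and> nonneg_mat (A \<mu>)"
    and A_lip: "\<exists>C. C-lipschitz_on prob_simplex A"
    and AN_mat: "\<forall>N\<ge>1. \<forall>\<mu>\<in>prob_simplex.
                   irreducible_mat (AN N \<mu>) \<and> symmetric_mat (AN N \<mu>) \<and> nonneg_mat (AN N \<mu>)"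
    and AN_conv: "\<forall>x y. uniform_limit prob_simplex (\<lambda>N \<mu>. AN N \<mu> $ x $ y) (\<lambda>\<mu>. A \<mu> $ x $ y) sequentially"
  shows "(\<forall>x y. x \<noteq> y \<longrightarrow>
            (\<forall>\<epsilon>>0. \<exists>N0. \<forall>N\<ge>N0. \<forall>\<mu>\<in>empirical_measures N. \<mu> $ x > 0 \<longrightarrow>
                \<bar>QN K AN N x y \<mu> - Qlim K A x y \<mu>\<bar> < \<epsilon>))
       \<and> (\<forall>x y. \<exists>C. C-lipschitz_on prob_simplex (Qlim K A x y))"
proof -
  define T where "T = (prob_simplex :: (real^'n) set)"
  obtain S where S: "open S" "T \<subseteq> S" "\<forall>x. C2_on S (K x)" using K_C2 unfolding T_def by blast
  have "\<forall>x. \<exists>D D2. (\<forall>u\<in>S. (K x has_derivative blinfun_apply (D u)) (at u)) \<and>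
      (\<forall>u\<in>S. (D has_derivative blinfun_apply (D2 u)) (at u)) \<and> continuous_on S D2"
    using S(3) unfolding C2_on_def by blast
  then obtain DK D2K where DD: "\<And>x. (\<forall>u\<in>S. (K x has_derivative blinfun_apply (DK x u)) (at u)) \<and>
      (\<forall>u\<in>S. (DK x has_derivative blinfun_apply (D2K x u)) (at u)) \<and> continuous_on S (D2K x)"
    by metis
  have Tcv: "convex T" and Tcp: "compact T" unfolding T_def by (rule simplex_convex, rule simplex_compact)
  have derK: "\<And>z u. u \<in> T \<Longrightarrow> (K z has_derivative blinfun_apply (DK z u)) (at u)"
    using DD S(2) by blast
  have derD: "\<And>z u. u \<in> T \<Longrightarrow> (DK z has_derivative blinfun_apply (D2K z u)) (at u)"
    using DD S(2) by blast
  have contD2: "\<And>z. continuous_on T (D2K z)" using DD S(2) continuous_on_subset by blast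
  have contDK: "\<And>z. continuous_on T (DK z)"
    by (rule continuous_at_imp_continuous_on) (use derD has_derivative_continuous in blast)
  have contK: "\<And>z. continuous_on T (K z)"
    by (rule continuous_at_imp_continuous_on) (use derK has_derivative_continuous in blast)
  have HF: "\<And>x u. u \<in> T \<Longrightarrow> Hfun K x u = (\<Sum>z\<in>UNIV. u$z * DK z u (delta_vec x)) + K x u"
    by (rule Hfun_formula) (use derK in blast)
  have nd: "norm (delta_vec x :: real^'n) = 1" for x by (simp add: delta_vec_def)

  have lipK: "\<exists>C. C-lipschitz_on T (K z)" for z
  proof -
    obtain B where B: "\<forall>u\<in>T. norm (DK z u) \<le> B" using bounded_on_compact[OF contDK Tcp] by blast
    have "(max 0 B)-lipschitz_on T (K z)"
    proof (rule deriv_bound_lip[OF Tcv])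
      show "\<forall>u\<in>T. (K z has_derivative blinfun_apply (DK z u)) (at u)" using derK by blast
      show "\<forall>u\<in>T. \<forall>h. \<bar>blinfun_apply (DK z u) h\<bar> \<le> max 0 B * norm h"
      proof (intro ballI allI)
        fix u h assume "u \<in> T"
        have "\<bar>blinfun_apply (DK z u) h\<bar> \<le> norm (DK z u) * norm h" using norm_blinfun by (metis real_norm_def)
        also have "\<dots> \<le> max 0 B * norm h" by (rule mult_right_mono) (use B \<open>u \<in> T\<close> in auto)
        finally show "\<bar>blinfun_apply (DK z u) h\<bar> \<le> max 0 B * norm h" .
      qed
    qed simp
    thus ?thesis by blast
  qed
  have lipG: "\<exists>C. C-lipschitz_on T (\<lambda>u. DK z u (delta_vec x))" for z x
  proof -
    obtain B where B: "\<forall>u\<in>T. norm (D2K z u) \<le> B" using bounded_on_compact[OF contD2 Tcp] by blast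
    have "(max 0 B)-lipschitz_on T (\<lambda>u. DK z u (delta_vec x))"
    proof (rule deriv_bound_lip[OF Tcv])
      show "\<forall>u\<in>T. ((\<lambda>u. DK z u (delta_vec x)) has_derivative (\<lambda>h. D2K z u h (delta_vec x))) (at u)"
      proof
        fix u assume "u \<in> T"
        have "((\<lambda>u. DK z u (delta_vec x)) has_derivative
              (\<lambda>h. DK z u ((\<lambda>h. 0) h) + D2K z u h (delta_vec x))) (at u)"
          by (rule blinfun.FDERIV[OF derD[OF \<open>u \<in> T\<close>] has_derivative_const])
        thus "((\<lambda>u. DK z u (delta_vec x)) has_derivative (\<lambda>h. D2K z u h (delta_vec x))) (at u)"
          by (simp add: blinfun.zero_right)
      qed
      show "\<forall>u\<in>T. \<forall>h. \<bar>D2K z u h (delta_vec x)\<bar> \<le> max 0 B * norm h"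
      proof (intro ballI allI)
        fix u h assume "u \<in> T"
        have "\<bar>D2K z u h (delta_vec x)\<bar> \<le> norm (D2K z u h) * norm (delta_vec x :: real^'n)"
          using norm_blinfun by (metis real_norm_def)
        also have "\<dots> = norm (D2K z u h)" using nd by simp
        also have "\<dots> \<le> norm (D2K z u) * norm h" by (rule norm_blinfun)
        also have "\<dots> \<le> max 0 B * norm h" by (rule mult_right_mono) (use B \<open>u \<in> T\<close> in auto)
        finally show "\<bar>D2K z u h (delta_vec x)\<bar> \<le> max 0 B * norm h" .
      qed
    qed simp
    thus ?thesis by blast
  qed
  have lipH: "\<exists>C. C-lipschitz_on T (Hfun K x)" for x
  proof -
    have "\<exists>C. C-lipschitz_on T (\<lambda>u. \<Sum>z\<in>UNIV. u$z * DK z u (delta_vec x))"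
    proof (rule lip_sum, simp, rule ballI)
      fix z
      obtain C where C: "C-lipschitz_on T (\<lambda>u. DK z u (delta_vec x))" using lipG by blast
      obtain M1 where "\<forall>u\<in>T. \<bar>u $ z\<bar> \<le> M1" using lip_bounded[OF coord_lip Tcp] by blast
      moreover obtain M2 where "\<forall>u\<in>T. \<bar>DK z u (delta_vec x)\<bar> \<le> M2" using lip_bounded[OF C Tcp] by blast
      ultimately show "\<exists>C. C-lipschitz_on T (\<lambda>u. u $ z * DK z u (delta_vec x))"
        using lip_mult[OF coord_lip C] by blast
    qed
    then obtain C1 where C1: "C1-lipschitz_on T (\<lambda>u. \<Sum>z\<in>UNIV. u$z * DK z u (delta_vec x))" by blast
    obtain C2 where C2: "C2-lipschitz_on T (K x)" using lipK by blast
    have "(C1 + C2)-lipschitz_on T (\<lambda>u. (\<Sum>z\<in>UNIV. u$z * DK z u (delta_vec x)) + K x u)"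
      by (rule lipschitz_on_add[OF C1 C2])
    hence "(C1 + C2)-lipschitz_on T (Hfun K x)"
      by (rule lipschitz_on_transform) (use HF in simp)
    thus ?thesis by blast
  qed
  have lipF: "\<exists>C. C-lipschitz_on T (\<lambda>u. (Hfun K x u - Hfun K y u) / 2)" for x y
  proof -
    obtain C1 C2 where "C1-lipschitz_on T (Hfun K x)" "C2-lipschitz_on T (Hfun K y)" using lipH by blast
    from lipschitz_on_cmult_real[OF lipschitz_on_diff[OF this], of "1/2"]
    show ?thesis by (auto simp: field_simps)
  qed
  have lipA: "\<exists>C. C-lipschitz_on T (\<lambda>u. A u $ x $ y)" for x y
  proof -
    obtain C where C: "C-lipschitz_on T A" using A_lip unfolding T_def by blast
    have "C-lipschitz_on T (\<lambda>u. A u $ x $ y)"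
    proof (rule lipschitz_onI)
      show "0 \<le> C" using lipschitz_on_nonneg[OF C] .
      fix u v assume "u \<in> T" "v \<in> T"
      have "dist (A u $ x $ y) (A v $ x $ y) \<le> dist (A u $ x) (A v $ x)" by (rule dist_vec_nth_le)
      also have "\<dots> \<le> dist (A u) (A v)" by (rule dist_vec_nth_le)
      also have "\<dots> \<le> C * dist u v" using lipschitz_onD[OF C \<open>u \<in> T\<close> \<open>v \<in> T\<close>] .
      finally show "dist (A u $ x $ y) (A v $ x $ y) \<le> C * dist u v" .
    qed
    thus ?thesis by blast
  qed

  have part2: "\<exists>C. C-lipschitz_on T (Qlim K A x y)" for x y
  proof -
    obtain CF where CF: "CF-lipschitz_on T (\<lambda>u. (Hfun K x u - Hfun K y u) / 2)" using lipF by blast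
    obtain MF where MF: "\<forall>u\<in>T. \<bar>(Hfun K x u - Hfun K y u) / 2\<bar> \<le> MF" using lip_bounded[OF CF Tcp] by blast
    have E: "(exp MF * CF)-lipschitz_on T (\<lambda>u. exp ((Hfun K x u - Hfun K y u) / 2))"
      by (rule lip_exp[OF CF MF])
    obtain ME where ME: "\<forall>u\<in>T. \<bar>exp ((Hfun K x u - Hfun K y u) / 2)\<bar> \<le> ME" using lip_bounded[OF E Tcp] by blast
    obtain CA where CA: "CA-lipschitz_on T (\<lambda>u. A u $ x $ y)" using lipA by blast
    obtain MA where MA: "\<forall>u\<in>T. \<bar>A u $ x $ y\<bar> \<le> MA" using lip_bounded[OF CA Tcp] by blast
    have "\<exists>L. L-lipschitz_on T (\<lambda>u. exp ((Hfun K x u - Hfun K y u) / 2) * A u $ x $ y)"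
      by (rule lip_mult[OF E CA ME MA])
    moreover have "Qlim K A x y = (\<lambda>u. exp ((Hfun K x u - Hfun K y u) / 2) * A u $ x $ y)"
      by (rule ext) (rule Qlim_eq)
    ultimately show ?thesis by simp
  qed

  have part1: "\<exists>N0. \<forall>N\<ge>N0. \<forall>\<mu>\<in>empirical_measures N. \<mu> $ x > 0 \<longrightarrow>
                \<bar>QN K AN N x y \<mu> - Qlim K A x y \<mu>\<bar> < \<epsilon>" if xy: "x \<noteq> y" and eps: "\<epsilon> > 0" for x y \<epsilon>
  proof -
    obtain CF where CF: "CF-lipschitz_on T (\<lambda>u. (Hfun K x u - Hfun K y u) / 2)" using lipF by blast
    obtain M where M: "\<forall>u\<in>T. \<bar>(Hfun K x u - Hfun K y u) / 2\<bar> \<le> M" using lip_bounded[OF CF Tcp] by blast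
    obtain CA where CA: "CA-lipschitz_on T (\<lambda>u. A u $ x $ y)" using lipA by blast
    obtain MA where MA: "\<forall>u\<in>T. \<bar>A u $ x $ y\<bar> \<le> MA" using lip_bounded[OF CA Tcp] by blast
    define c where "c = exp (M + 1) * (1 + \<bar>MA\<bar>)"
    have c: "c > 0" unfolding c_def by (simp add: add_pos_nonneg)
    define \<eta> where "\<eta> = min 1 (\<epsilon> / (2 * c))"
    have eta: "\<eta> > 0" "\<eta> \<le> 1" "c * \<eta> < \<epsilon>" unfolding \<eta>_def using c eps
      by (auto simp: min_def field_simps)
    define e where "e = \<eta> / 4"
    have e: "e > 0" unfolding e_def using eta by simp
    have "\<exists>d>0. \<forall>z. \<forall>u\<in>T. \<forall>v\<in>T. norm (v - u) < d \<longrightarrow>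
            \<bar>K z v - K z u - DK z u (v - u)\<bar> \<le> e * norm (v - u) \<and> \<bar>K z v - K z u\<bar> \<le> e"
    proof (rule finite_min_delta[where P="\<lambda>z d. \<forall>u\<in>T. \<forall>v\<in>T. norm (v - u) < d \<longrightarrow>
            \<bar>K z v - K z u - DK z u (v - u)\<bar> \<le> e * norm (v - u) \<and> \<bar>K z v - K z u\<bar> \<le> e"])
      show "\<forall>z. \<exists>d>0. \<forall>u\<in>T. \<forall>v\<in>T. norm (v - u) < d \<longrightarrow>
            \<bar>K z v - K z u - DK z u (v - u)\<bar> \<le> e * norm (v - u) \<and> \<bar>K z v - K z u\<bar> \<le> e"
      proof
        fix z
        obtain d1 where d1: "d1 > 0" "\<forall>u\<in>T. \<forall>v\<in>T. norm (v - u) < d1 \<longrightarrow>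
             \<bar>K z v - K z u - DK z u (v - u)\<bar> \<le> e * norm (v - u)"
          using lin_approx[OF Tcv Tcp _ contDK e] derK by blast
        have "uniformly_continuous_on T (K z)" using compact_uniformly_continuous[OF contK Tcp] .
        then obtain d2 where d2: "d2 > 0" "\<And>u v. u \<in> T \<Longrightarrow> v \<in> T \<Longrightarrow> dist v u < d2 \<Longrightarrow> dist (K z v) (K z u) < e"
          unfolding uniformly_continuous_on_def using e by metis
        show "\<exists>d>0. \<forall>u\<in>T. \<forall>v\<in>T. norm (v - u) < d \<longrightarrow>
            \<bar>K z v - K z u - DK z u (v - u)\<bar> \<le> e * norm (v - u) \<and> \<bar>K z v - K z u\<bar> \<le> e"
        proof (intro exI[of _ "min d1 d2"] conjI ballI impI)
          show "min d1 d2 > 0" using d1 d2 by simp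
          fix u v assume uv: "u \<in> T" "v \<in> T" "norm (v - u) < min d1 d2"
          show "\<bar>K z v - K z u - DK z u (v - u)\<bar> \<le> e * norm (v - u)" using d1(2) uv by auto
          have "dist (K z v) (K z u) < e" using d2(2)[OF uv(1,2)] uv(3) by (simp add: dist_norm)
          thus "\<bar>K z v - K z u\<bar> \<le> e" by (simp add: dist_real_def)
        qed
      qed
    qed auto
    then obtain d where d: "d > 0" "\<And>z u v. u \<in> T \<Longrightarrow> v \<in> T \<Longrightarrow> norm (v - u) < d \<Longrightarrow>
            \<bar>K z v - K z u - DK z u (v - u)\<bar> \<le> e * norm (v - u) \<and> \<bar>K z v - K z u\<bar> \<le> e"
      by blast
    have "\<forall>\<^sub>F N in sequentially. \<forall>u\<in>T. dist (AN N u $ x $ y) (A u $ x $ y) < \<eta>"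
      using AN_conv eta(1) unfolding uniform_limit_iff T_def by blast
    then obtain N1 where N1: "\<And>N u. N \<ge> N1 \<Longrightarrow> u \<in> T \<Longrightarrow> dist (AN N u $ x $ y) (A u $ x $ y) < \<eta>"
      unfolding eventually_sequentially by blast
    obtain N2 :: nat where N2: "real N2 > 2 / d" using reals_Archimedean2 by blast
    have N2pos: "0 < real N2" using N2 d(1) by (metis divide_pos_pos zero_less_numeral order.strict_trans)
    show ?thesis
    proof (intro exI[of _ "max 1 (max N1 N2)"] allI impI ballI)
      fix N :: nat and \<mu> assume N: "max 1 (max N1 N2) \<le> N" and mu: "\<mu> \<in> empirical_measures N" and mx: "\<mu> $ x > 0"
      have N1': "N \<ge> 1" "N \<ge> N1" "N \<ge> N2" using N by auto
      have Npos: "real N > 0" using N1' by simp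
      have muT: "\<mu> \<in> T" unfolding T_def using empirical_in_simplex[OF N1'(1) mu] .
      hence mu_nn: "\<forall>z. 0 \<le> \<mu> $ z" and mu_sum: "(\<Sum>z\<in>UNIV. \<mu> $ z) = 1"
        unfolding T_def prob_simplex_def by auto
      have mx': "\<mu> $ x \<ge> 1 / real N" using empirical_pos[OF mu mx] .
      define h where "h = (1 / real N) *\<^sub>R (delta_vec y - delta_vec x)"
      define v where "v = \<mu> + h"
      have vz: "v $ z = \<mu> $ z + (if z = y then 1 / real N else 0) - (if z = x then 1 / real N else 0)" for z
        unfolding v_def h_def by (simp add: delta_nth algebra_simps)
      have vT: "v \<in> T"
      proof -
        have "\<forall>z. 0 \<le> v $ z"
        proof
          fix z show "0 \<le> v $ z" unfolding vz using mu_nn[rule_format, of z] mx' xy Npos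
            by (cases "z = x"; cases "z = y") auto
        qed
        moreover have "(\<Sum>z\<in>UNIV. v $ z) = 1"
          unfolding vz using mu_sum xy by (simp add: sum.distrib sum_subtractf)
        ultimately show ?thesis unfolding T_def prob_simplex_def by blast
      qed
      have nh: "norm h < d"
      proof -
        have "norm h \<le> (1 / real N) * 2"
          unfolding h_def using norm_triangle_ineq4[of "delta_vec y" "delta_vec x"] nd Npos
          by (simp add: divide_right_mono)
        also have "\<dots> \<le> 2 / real N2"
        proof -
          have "(1 / real N) * 2 = 2 / real N" by simp
          also have "\<dots> \<le> 2 / real N2" by (rule divide_left_mono) (use N1'(3) N2pos in auto)
          finally show ?thesis .
        qed
        also have "\<dots> < d" using N2 d(1) N2pos by (simp add: field_simps)
        finally show ?thesis .
      qed
      have w: "\<bar>K z (\<mu> + h) - K z \<mu> - DK z \<mu> h\<bar> \<le> e * norm h \<and> \<bar>K z (\<mu> + h) - K z \<mu>\<bar> \<le> e" for z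
        using d(2)[OF muT vT, of z] nh unfolding v_def by simp
      have est: "\<bar>real N * (energy K (\<mu> + h) - energy K \<mu>) - (Hfun K y \<mu> - Hfun K x \<mu>)\<bar> \<le> 4 * e"
        by (rule energy_est[where DK=DK, OF Npos _ _ _ mu_nn mu_sum h_def]) (use derK[OF muT] w in auto)
      define a' where "a' = - (real N / 2) * (energy K (\<mu> + h) - energy K \<mu>)"
      define a where "a = (Hfun K x \<mu> - Hfun K y \<mu>) / 2"
      have aa: "\<bar>a' - a\<bar> \<le> \<eta>"
      proof -
        have "a' - a = - (real N * (energy K (\<mu> + h) - energy K \<mu>) - (Hfun K y \<mu> - Hfun K x \<mu>)) / 2"
          unfolding a'_def a_def by (simp add: field_simps)
        thus ?thesis using est unfolding e_def by simp
      qed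
      have bb: "\<bar>AN N \<mu> $ x $ y - A \<mu> $ x $ y\<bar> \<le> \<eta>"
        using N1[OF N1'(2) muT] by (simp add: dist_real_def)
      have "\<bar>exp a' * AN N \<mu> $ x $ y - exp a * A \<mu> $ x $ y\<bar> \<le> exp (M + 1) * \<eta> * (1 + \<bar>MA\<bar>)"
        by (rule exp_prod_est[OF aa bb eta(2)]) (use M MA muT in \<open>auto simp: a_def\<close>)
      also have "\<dots> = c * \<eta>" unfolding c_def by simp
      also have "\<dots> < \<epsilon>" by (rule eta(3))
      finally show "\<bar>QN K AN N x y \<mu> - Qlim K A x y \<mu>\<bar> < \<epsilon>"
        unfolding QN_def Qlim_eq a'_def a_def h_def by simp
    qed
  qed
  show ?thesis using part1 part2 unfolding T_def by blast
qed

end
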